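(* Consider binary-tree pivotal sampling on a fixed full binary tree $T$ under the standing assumptions. Define a random assignment of values $\eta_v\in\{0,1\}$ to all non-root nodes of $T$ top-down as follows: for the children $r_1,r_2$ of the root, set $(\eta_{r_1},\eta_{r_2})=(1,0)$ with probability $\pi_{r_1}$ and $(0,1)$ otherwise; then, proceeding level by level, for each internal node $v$ already assigned, with children $v_1,v_2$, draw $(\eta_{v_1},\eta_{v_2})$ independently of everything else from the conditional law given $\xi_v=\eta_v$ described by: if $\pi_{v_1}+\pi_{v_2}>1$, $(1,1)$ when $\eta_v=1$, and when $\eta_v=0$, $(1,0)$ with probability $\frac{1-\pi_{v_2}}{2-\pi_{v_1}-\pi_{v_2}}$ and $(0,1)$ otherwise; if $\pi_{v_1}+\pi_{v_2}<1$, $(0,0)$ when $\eta_v=0$, and when $\eta_v=1$, $(1,0)$ with probability $\frac{\pi_{v_1}}{\pi_{v_1}+\pi_{v_2}}$ and $(0,1)$ otherwise. Then the vector $(\eta_\ell)_{\ell\text{ leaf}}$ has the same joint distribution as the vector $(\xi_\ell)_{\ell\text{ leaf}}$ of leaf inclusion indicators produced by binary-tree pivotal sampling.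
   Context: Binary-tree pivotal sampling: let $T$ be a full binary tree whose leaves are identified with an index set, and let $q_i\in[0,1]$ be leaf probabilities with integer sum. Each node can store an index together with a current probability; initially each leaf $i$ stores $i$ with probability $q_i$, and the output set $\mathcal S_{\rm out}$ is empty. Repeatedly choose two sibling nodes that both store indices, say $i$ with probability $q_i$ and $j$ with probability $q_j$, with parent $P$, and remove them. If $q_i+q_j\le1$: with probability $q_i/(q_i+q_j)$ store $i$ at $P$ with probability $q_i+q_j$ ($j$ is rejected), otherwise store $j$ at $P$ with probability $q_i+q_j$ ($i$ is rejected). If $q_i+q_j>1$: with probability $(1-q_i)/(2-q_i-q_j)$ put $j$ into $\mathcal S_{\rm out}$ and store $i$ at $P$ with probability $q_i+q_j-1$; otherwise put $i$ into $\mathcal S_{\rm out}$ and store $j$ at $P$ with probability $q_i+q_j-1$. When only the root stores an index, put it into $\mathcal S_{\rm out}$ iff its probability is $1$. Carried probabilities: $\pi_v=q_i$ for a leaf $v$ with index $i$; for an internal node $v$ with children $v_1,v_2$, $\pi_v=\pi_{v_1}+\pi_{v_2}$ if $\pi_{v_1}+\pi_{v_2}<1$ and $\pi_v=\pi_{v_1}+\pi_{v_2}-1$ if $\pi_{v_1}+\pi_{v_2}>1$. Node statuses: for a non-root node $v$, $\xi_v\in\{0,1\}$ is the indicator that the index stored at $v$ (for a leaf, its own index; for an internal node, the index promoted to $v$ by the comparison of its children) belongs to the final output $\mathcal S_{\rm out}$. Standing assumptions: all leaf probabilities lie in $(0,1)$; for every internal non-root node $v$ with children $v_1,v_2$, $\pi_{v_1}+\pi_{v_2}\ne1$;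 for the two children $r_1,r_2$ of the root, $\pi_{r_1}+\pi_{r_2}=1$. *)

theory Defs
  imports "HOL-Probability.Probability"
begin

datatype 'a btree = Lf 'a | Nd "'a btree" "'a btree"

fun leaves :: "'a btree \<Rightarrow> 'a list" where
  "leaves (Lf i) = [i]"
| "leaves (Nd l r) = leaves l @ leaves r"

fun subtrees :: "'a btree \<Rightarrow> 'a btree set" where
  "subtrees (Lf i) = {Lf i}"
| "subtrees (Nd l r) = insert (Nd l r) (subtrees l \<union> subtrees r)"

text \<open>Carried probabilities pi_v (the case of sum exactly 1 only occurs at the root).\<close>
fun carried :: "('a \<Rightarrow> real) \<Rightarrow> 'a btree \<Rightarrow> real" where
  "carried q (Lf i) = q i"
| "carried q (Nd l r) =
     (let s = carried q l + carried q r in if s \<le> 1 then s else s - 1)"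

text \<open>One pivotal duel of two sibling nodes storing (i, qi) and (j, qj):
  returns the index stored at the parent, its probability, and the set of
  indices put into the output.\<close>
definition duel :: "'a \<Rightarrow> real \<Rightarrow> 'a \<Rightarrow> real \<Rightarrow> ('a \<times> real \<times> 'a set) pmf" where
  "duel i qi j qj =
     (if qi + qj \<le> 1 then
        map_pmf (\<lambda>b. if b then (i, qi + qj, {}) else (j, qi + qj, {}))
          (bernoulli_pmf (qi / (qi + qj)))
      else
        map_pmf (\<lambda>b. if b then (i, qi + qj - 1, {j}) else (j, qi + qj - 1, {i}))
          (bernoulli_pmf ((1 - qi) / (2 - qi - qj))))"

text \<open>Pivotal sampling on a subtree: distribution of (index stored at its
  top node, probability stored there, indices put into the output so far).
  Disjoint subtrees are processed independently.\<close>
fun pivotal_sub :: "('a \<Rightarrow> real) \<Rightarrow> 'a btree \<Rightarrow> ('a \<times> real \<times> 'a set) pmf" where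
  "pivotal_sub q (Lf i) = return_pmf (i, q i, {})"
| "pivotal_sub q (Nd l r) =
     bind_pmf (pivotal_sub q l) (\<lambda>(i, qi, S1).
     bind_pmf (pivotal_sub q r) (\<lambda>(j, qj, S2).
     map_pmf (\<lambda>(k, qk, S3). (k, qk, S1 \<union> S2 \<union> S3)) (duel i qi j qj)))"

text \<open>The output set S_out of binary-tree pivotal sampling; leaf i has
  xi_i = 1 iff i is in this set.\<close>
definition pivotal_out :: "('a \<Rightarrow> real) \<Rightarrow> 'a btree \<Rightarrow> 'a set pmf" where
  "pivotal_out q T =
     map_pmf (\<lambda>(k, qk, S). if qk = 1 then insert k S else S) (pivotal_sub q T)"

text \<open>Top-down assignment of eta: given the value e of eta at the top node of
  a (non-root) subtree, the distribution of the set of leaves with eta = 1.\<close>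
fun eta_sub :: "('a \<Rightarrow> real) \<Rightarrow> bool \<Rightarrow> 'a btree \<Rightarrow> 'a set pmf" where
  "eta_sub q e (Lf i) = return_pmf (if e then {i} else {})"
| "eta_sub q e (Nd l r) =
     (let a = carried q l; b = carried q r;
          kids = (\<lambda>(e1, e2). bind_pmf (eta_sub q e1 l) (\<lambda>A.
                              map_pmf (\<lambda>B. A \<union> B) (eta_sub q e2 r)))
      in if a + b > 1 then
           (if e then kids (True, True)
            else bind_pmf (bernoulli_pmf ((1 - b) / (2 - a - b)))
                   (\<lambda>c. if c then kids (True, False) else kids (False, True)))
         else
           (if e then bind_pmf (bernoulli_pmf (a / (a + b)))
                   (\<lambda>c. if c then kids (True, False) else kids (False, True))
            else kids (False, False)))"

definition eta_leaves :: "('a \<Rightarrow> real) \<Rightarrow> 'a btree \<Rightarrow> 'a btree \<Rightarrow> 'a set pmf" where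
  "eta_leaves q r1 r2 =
     bind_pmf (bernoulli_pmf (carried q r1)) (\<lambda>c.
       bind_pmf (eta_sub q c r1) (\<lambda>A. map_pmf (\<lambda>B. A \<union> B) (eta_sub q (\<not> c) r2)))"

end

theory Submission imports Defs begin

lemma bern_not: assumes "0 \<le> p" "p \<le> 1"
  shows "map_pmf Not (bernoulli_pmf p) = bernoulli_pmf (1 - p)"
proof (rule pmf_eqI)
  fix b :: bool
  have "pmf (map_pmf Not (bernoulli_pmf p)) b = pmf (map_pmf Not (bernoulli_pmf p)) (Not (Not b))" by simp
  also have "\<dots> = pmf (bernoulli_pmf p) (Not b)" by (rule pmf_map_inj') (simp add: inj_def)
  finally show "pmf (map_pmf Not (bernoulli_pmf p)) b = pmf (bernoulli_pmf (1 - p)) b"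
    using assms by (cases b) auto
qed

lemma commute3: "bind_pmf A (\<lambda>x. bind_pmf B (\<lambda>y. map_pmf (f x y) C))
   = bind_pmf C (\<lambda>c. bind_pmf A (\<lambda>x. map_pmf (\<lambda>y. f x y c) B))"
proof -
  have "bind_pmf A (\<lambda>x. bind_pmf B (\<lambda>y. map_pmf (f x y) C))
      = bind_pmf A (\<lambda>x. bind_pmf C (\<lambda>c. map_pmf (\<lambda>y. f x y c) B))"
    unfolding map_pmf_def by (subst bind_commute_pmf) simp
  also have "\<dots> = bind_pmf C (\<lambda>c. bind_pmf A (\<lambda>x. map_pmf (\<lambda>y. f x y c) B))"
    by (rule bind_commute_pmf)
  finally show ?thesis .
qed

lemma carried_bounds:
  "(\<forall>i\<in>set (leaves v). 0 < q i \<and> q i < 1) \<Longrightarrow>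
   (\<forall>v1 v2. Nd v1 v2 \<in> subtrees v \<longrightarrow> carried q v1 + carried q v2 \<noteq> 1) \<Longrightarrow>
   0 < carried q v \<and> carried q v < 1"
proof (induction v)
  case (Lf x) then show ?case by simp
next
  case (Nd l r)
  have "0 < carried q l \<and> carried q l < 1" using Nd by auto
  moreover have "0 < carried q r \<and> carried q r < 1" using Nd by auto
  moreover have "carried q l + carried q r \<noteq> 1" using Nd.prems by auto
  ultimately show ?case by (auto simp: Let_def)
qed

lemma pivotal_snd: "x \<in> set_pmf (pivotal_sub q v) \<Longrightarrow> fst (snd x) = carried q v"
proof (induction v arbitrary: x)
  case (Lf i) then show ?case by simp
next
  case (Nd l r)
  then show ?case
    by (fastforce simp: duel_def Let_def split: if_splits prod.splits)
qed

lemma map_const': "(\<And>c. f c = x) \<Longrightarrow> map_pmf f M = return_pmf x"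
proof -
  assume "\<And>c. f c = x"
  hence "f = (\<lambda>_. x)" by auto
  thus ?thesis by simp
qed

definition G :: "bool \<Rightarrow> 'a \<times> real \<times> 'a set \<Rightarrow> 'a set" where
  "G e x = (if e then insert (fst x) (snd (snd x)) else snd (snd x))"

lemma kids_eq:
  assumes "\<And>e. map_pmf (G e) (pivotal_sub q l) = eta_sub q e l"
      and "\<And>e. map_pmf (G e) (pivotal_sub q r) = eta_sub q e r"
  shows "bind_pmf (eta_sub q e1 l) (\<lambda>A. map_pmf (\<lambda>B. A \<union> B) (eta_sub q e2 r))
      = bind_pmf (pivotal_sub q l) (\<lambda>x. map_pmf (\<lambda>y. G e1 x \<union> G e2 y) (pivotal_sub q r))"
  by (simp add: assms[symmetric] bind_map_pmf map_pmf_comp)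

lemma main:
  "(\<forall>i\<in>set (leaves v). 0 < q i \<and> q i < 1) \<Longrightarrow>
   (\<forall>v1 v2. Nd v1 v2 \<in> subtrees v \<longrightarrow> carried q v1 + carried q v2 \<noteq> 1) \<Longrightarrow>
   map_pmf (G e) (pivotal_sub q v) = eta_sub q e v"
proof (induction v arbitrary: e)
  case (Lf x) then show ?case by (simp add: G_def)
next
  case (Nd l r)
  define a where "a = carried q l"
  define b where "b = carried q r"
  have ha: "0 < a \<and> a < 1" unfolding a_def using Nd.prems by (intro carried_bounds) auto
  have hb: "0 < b \<and> b < 1" unfolding b_def using Nd.prems by (intro carried_bounds) auto
  have hab: "a + b \<noteq> 1" using Nd.prems by (auto simp: a_def b_def)
  have IHl: "\<And>e. map_pmf (G e) (pivotal_sub q l) = eta_sub q e l" using Nd by auto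
  have IHr: "\<And>e. map_pmf (G e) (pivotal_sub q r) = eta_sub q e r" using Nd by auto
  note K = kids_eq[OF IHl IHr]
  define PL where "PL = pivotal_sub q l"
  define PR where "PR = pivotal_sub q r"
  have P: "pivotal_sub q (Nd l r) = bind_pmf PL (\<lambda>x. bind_pmf PR (\<lambda>y.
       map_pmf (\<lambda>(k, qk, S3). (k, qk, snd (snd x) \<union> snd (snd y) \<union> S3)) (duel (fst x) a (fst y) b)))"
    unfolding PL_def PR_def
    by (auto intro!: bind_pmf_cong simp: a_def b_def split: prod.splits dest!: pivotal_snd)
  show ?case
  proof (cases "a + b < 1")
    case True
    have D: "\<And>i j. duel i a j b = map_pmf (\<lambda>c. if c then (i, a + b, {}) else (j, a + b, {}))
                 (bernoulli_pmf (a / (a + b)))" using True by (simp add: duel_def)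
    have E: "eta_sub q e (Nd l r) = (if e then bind_pmf (bernoulli_pmf (a / (a + b)))
                   (\<lambda>c. if c then bind_pmf PL (\<lambda>x. map_pmf (\<lambda>y. G True x \<union> G False y) PR)
                        else bind_pmf PL (\<lambda>x. map_pmf (\<lambda>y. G False x \<union> G True y) PR))
            else bind_pmf PL (\<lambda>x. map_pmf (\<lambda>y. G False x \<union> G False y) PR))"
      using True by (simp add: Let_def a_def b_def K PL_def PR_def cong: if_cong)
    show ?thesis
    proof (cases e)
      case True
      have "map_pmf (G e) (pivotal_sub q (Nd l r)) = bind_pmf PL (\<lambda>x. bind_pmf PR (\<lambda>y.
         map_pmf (\<lambda>c. G True (if c then (fst x, a+b, snd (snd x) \<union> snd (snd y))
                             else (fst y, a+b, snd (snd x) \<union> snd (snd y)))) (bernoulli_pmf (a / (a + b)))))"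
        unfolding P D using True by (simp add: map_bind_pmf map_pmf_comp if_distrib cong: if_cong)
      also have "\<dots> = bind_pmf (bernoulli_pmf (a / (a + b))) (\<lambda>c. bind_pmf PL (\<lambda>x. map_pmf (\<lambda>y.
           G True (if c then (fst x, a+b, snd (snd x) \<union> snd (snd y))
                             else (fst y, a+b, snd (snd x) \<union> snd (snd y)))) PR))"
        by (rule commute3)
      also have "\<dots> = eta_sub q e (Nd l r)"
        unfolding E using True by (auto intro!: bind_pmf_cong map_pmf_cong simp: G_def)
      finally show ?thesis .
    next
      case False
      have "map_pmf (G e) (pivotal_sub q (Nd l r)) = bind_pmf PL (\<lambda>x. bind_pmf PR (\<lambda>y.
         map_pmf (\<lambda>c. snd (snd x) \<union> snd (snd y)) (bernoulli_pmf (a / (a + b)))))"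
        unfolding P D using False by (simp add: map_bind_pmf map_pmf_comp G_def if_distrib cong: if_cong)
      also have "\<dots> = bind_pmf PL (\<lambda>x. map_pmf (\<lambda>y. G False x \<union> G False y) PR)"
        by (simp add: G_def map_pmf_def o_def insert_commute)
      finally show ?thesis using E False by simp
    qed
  next
    case False
    hence gt: "a + b > 1" using hab by auto
    have D: "\<And>i j. duel i a j b = map_pmf (\<lambda>c. if c then (i, a + b - 1, {j}) else (j, a + b - 1, {i}))
                 (bernoulli_pmf ((1 - a) / (2 - a - b)))" using gt by (simp add: duel_def)
    have E: "eta_sub q e (Nd l r) = (if e then bind_pmf PL (\<lambda>x. map_pmf (\<lambda>y. G True x \<union> G True y) PR)
            else bind_pmf (bernoulli_pmf ((1 - b) / (2 - a - b)))
                   (\<lambda>c. if c then bind_pmf PL (\<lambda>x. map_pmf (\<lambda>y. G True x \<union> G False y) PR)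
                        else bind_pmf PL (\<lambda>x. map_pmf (\<lambda>y. G False x \<union> G True y) PR)))"
      using gt by (simp add: Let_def a_def b_def K PL_def PR_def cong: if_cong)
    show ?thesis
    proof (cases e)
      case True
      have "map_pmf (G e) (pivotal_sub q (Nd l r)) = bind_pmf PL (\<lambda>x. bind_pmf PR (\<lambda>y.
         return_pmf (insert (fst x) (insert (fst y) (snd (snd x) \<union> snd (snd y))))))"
        unfolding P D using True by (auto simp: map_bind_pmf map_pmf_comp G_def intro!: bind_pmf_cong map_const' split: prod.splits if_splits)
      also have "\<dots> = bind_pmf PL (\<lambda>x. map_pmf (\<lambda>y. G True x \<union> G True y) PR)"
        by (simp add: G_def map_pmf_def o_def insert_commute)
      finally show ?thesis using E True by simp
    next
      case False
      have pa: "0 \<le> (1 - a) / (2 - a - b)" "(1 - a) / (2 - a - b) \<le> 1" using ha hb gt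
        by (auto simp: field_simps)
      have cmp: "1 - (1 - a) / (2 - a - b) = (1 - b) / (2 - a - b)" using ha hb gt
        by (auto simp: field_simps)
      have "map_pmf (G e) (pivotal_sub q (Nd l r)) = bind_pmf PL (\<lambda>x. bind_pmf PR (\<lambda>y.
         map_pmf (\<lambda>c. if c then insert (fst y) (snd (snd x) \<union> snd (snd y))
                        else insert (fst x) (snd (snd x) \<union> snd (snd y))) (bernoulli_pmf ((1 - a) / (2 - a - b)))))"
        unfolding P D using False by (auto simp: map_bind_pmf map_pmf_comp G_def intro!: bind_pmf_cong map_pmf_cong split: prod.splits if_splits)
      also have "\<dots> = bind_pmf (bernoulli_pmf ((1 - a) / (2 - a - b))) (\<lambda>c. bind_pmf PL (\<lambda>x. map_pmf (\<lambda>y.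
           if c then insert (fst y) (snd (snd x) \<union> snd (snd y))
                        else insert (fst x) (snd (snd x) \<union> snd (snd y))) PR))"
        by (rule commute3)
      also have "\<dots> = bind_pmf (map_pmf Not (bernoulli_pmf ((1 - a) / (2 - a - b)))) (\<lambda>c. bind_pmf PL (\<lambda>x. map_pmf (\<lambda>y.
           if c then insert (fst x) (snd (snd x) \<union> snd (snd y))
                        else insert (fst y) (snd (snd x) \<union> snd (snd y))) PR))"
        by (auto simp: bind_map_pmf intro!: bind_pmf_cong map_pmf_cong)
      also have "\<dots> = eta_sub q e (Nd l r)"
        unfolding E bern_not[OF pa] cmp using False
        by (auto intro!: bind_pmf_cong map_pmf_cong simp: G_def)
      finally show ?thesis .
    qed
  qed
qed


theorem propositionE12:
  fixes q :: "'a \<Rightarrow> real" and r1 r2 :: "'a btree"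
  defines "T \<equiv> Nd r1 r2"
  assumes distinct_leaves: "distinct (leaves T)"
    and leaf_probs: "\<forall>i\<in>set (leaves T). 0 < q i \<and> q i < 1"
    and integer_sum: "\<exists>n::nat. (\<Sum>i\<in>set (leaves T). q i) = real n"
    and nonroot: "\<forall>v1 v2. Nd v1 v2 \<in> subtrees r1 \<union> subtrees r2 \<longrightarrow>
                      carried q v1 + carried q v2 \<noteq> 1"
    and root: "carried q r1 + carried q r2 = 1"
  shows "eta_leaves q r1 r2 = pivotal_out q T"
proof -
  define a where "a = carried q r1"
  define b where "b = carried q r2"
  define PL where "PL = pivotal_sub q r1"
  define PR where "PR = pivotal_sub q r2"
  have IH1: "\<And>e. map_pmf (G e) PL = eta_sub q e r1" unfolding PL_def
    using leaf_probs nonroot by (intro main) (auto simp: T_def)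
  have IH2: "\<And>e. map_pmf (G e) PR = eta_sub q e r2" unfolding PR_def
    using leaf_probs nonroot by (intro main) (auto simp: T_def)
  have ab: "a + b = 1" using root by (simp add: a_def b_def)
  have P: "pivotal_sub q T = bind_pmf PL (\<lambda>x. bind_pmf PR (\<lambda>y.
       map_pmf (\<lambda>(k, qk, S3). (k, qk, snd (snd x) \<union> snd (snd y) \<union> S3)) (duel (fst x) a (fst y) b)))"
    unfolding PL_def PR_def T_def
    by (auto intro!: bind_pmf_cong simp: a_def b_def split: prod.splits dest!: pivotal_snd)
  have D: "\<And>i j. duel i a j b = map_pmf (\<lambda>c. if c then (i, a + b, {}) else (j, a + b, {}))
                 (bernoulli_pmf a)" using ab by (simp add: duel_def)
  have "pivotal_out q T = bind_pmf PL (\<lambda>x. bind_pmf PR (\<lambda>y. map_pmf (\<lambda>c.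
      if c then insert (fst x) (snd (snd x) \<union> snd (snd y))
      else insert (fst y) (snd (snd x) \<union> snd (snd y))) (bernoulli_pmf a)))"
    unfolding pivotal_out_def P D
    by (auto simp: ab map_bind_pmf map_pmf_comp intro!: bind_pmf_cong map_pmf_cong split: prod.splits if_splits)
  also have "\<dots> = bind_pmf (bernoulli_pmf a) (\<lambda>c. bind_pmf PL (\<lambda>x. map_pmf (\<lambda>y.
      if c then insert (fst x) (snd (snd x) \<union> snd (snd y))
      else insert (fst y) (snd (snd x) \<union> snd (snd y))) PR))"
    by (rule commute3)
  also have "\<dots> = eta_leaves q r1 r2"
    unfolding eta_leaves_def a_def[symmetric] IH1[symmetric] IH2[symmetric]
    by (auto simp: bind_map_pmf map_pmf_comp G_def intro!: bind_pmf_cong map_pmf_cong)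
  finally show ?thesis by simp
qed

end
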